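(* Let $P,Q\in\mathcal{PP}(n)$ with $P\preceq Q$, and let $(i,j)\in E(P)$ be such that $E(Q)=E(P)\setminus\{(i,j)\}$. Then $i,j$ are two consecutive letters in the word representing $\Psi_n^{-1}(P)$, and the word representing $\Psi_n^{-1}(Q)$ is obtained from that of $\Psi_n^{-1}(P)$ by permuting these two consecutive letters $ij$.
   Context: A plane poset is a finite set with two partial orders $\leq_h,\leq_r$ such that two distinct elements are $\leq_h$-comparable iff they are not $\leq_r$-comparable; $\mathcal{PP}(n)$ is the set of isomorphism classes of plane posets with $n$ elements. On a plane poset, $x\leq y$ iff ($x\leq_h y$ or $x\leq_r y$) is a total order (known fact); each $P\in\mathcal{PP}(n)$ is identified with $\{1,\ldots,n\}$ as a totally ordered set. For $\sigma\in\mathfrak{S}_n$, represented by the word $\sigma(1)\cdots\sigma(n)$, $\Psi_n(\sigma)$ is the plane poset on $\{1,\ldots,n\}$ with $a\leq_h b$ iff ($a\leq b$ and $\sigma^{-1}(a)\leq\sigma^{-1}(b)$) and $a\leq_r b$ iff ($a\leq b$ and $\sigma^{-1}(a)\geq\sigma^{-1}(b)$); it is known that $\Psi_n:\mathfrak{S}_n\to\mathcal{PP}(n)$ is a bijection. For $P\in\mathcal{PP}(n)$, $E(P)=\{(a,b)\mid a<_h b\text{ in }P\}$; $P\preceq Q$ means there exists $(i,j)\in E(P)$ with $E(Q)=E(P)\setminus\{(i,j)\}$. *)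

theory Defs
  imports "HOL-Combinatorics.Permutations"
begin

text \<open>A plane poset on {1..n} is represented by the pair of its two orders
  (le_h, le_r) as sets of pairs.\<close>
type_synonym plane_poset = "(nat \<times> nat) set \<times> (nat \<times> nat) set"

definition Psi :: "nat \<Rightarrow> (nat \<Rightarrow> nat) \<Rightarrow> plane_poset" where
  "Psi n \<sigma> =
    ({(a, b). a \<in> {1..n} \<and> b \<in> {1..n} \<and> a \<le> b \<and> inv \<sigma> a \<le> inv \<sigma> b},
     {(a, b). a \<in> {1..n} \<and> b \<in> {1..n} \<and> a \<le> b \<and> inv \<sigma> a \<ge> inv \<sigma> b})"

definition E :: "plane_poset \<Rightarrow> (nat \<times> nat) set" where
  "E P = {(a, b). (a, b) \<in> fst P \<and> a \<noteq> b}"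

text \<open>The word sigma(1) ... sigma(n) (list index k corresponds to position k+1).\<close>
definition word :: "nat \<Rightarrow> (nat \<Rightarrow> nat) \<Rightarrow> nat list" where
  "word n \<sigma> = map \<sigma> [1..<n+1]"

end

theory Submission
  imports Defs
begin

lemma E_iff:
  assumes "\<sigma> permutes {1..n}"
  shows "(a, b) \<in> E (Psi n \<sigma>) \<longleftrightarrow> a \<in> {1..n} \<and> b \<in> {1..n} \<and> a < b \<and> inv \<sigma> a < inv \<sigma> b"
proof -
  have inj: "inj (inv \<sigma>)" using permutes_inv[OF assms] permutes_inj by blast
  show ?thesis unfolding E_def Psi_def using inj
    by (auto simp: inj_eq) (metis injD order_le_neq_trans)
qed

lemma rank:
  assumes "\<rho> permutes {1..n}" "a \<in> {1..n}"
  shows "inv \<rho> a = card {b\<in>{1..n}. inv \<rho> b < inv \<rho> a} + 1"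
proof -
  let ?g = "inv \<rho>"
  have p: "?g permutes {1..n}" using permutes_inv[OF assms(1)] .
  have inj: "inj ?g" using p permutes_inj by blast
  have ga: "?g a \<in> {1..n}" using assms(2) by (rule permutes_in_image[OF p, THEN iffD2])
  have "?g ` {b\<in>{1..n}. ?g b < ?g a} = {1..<?g a}"
  proof
    show "?g ` {b\<in>{1..n}. ?g b < ?g a} \<subseteq> {1..<?g a}"
    proof clarify
      fix b assume b: "b \<in> {1..n}" "?g b < ?g a"
      have "?g b \<in> {1..n}" using b(1) by (rule permutes_in_image[OF p, THEN iffD2])
      then show "?g b \<in> {1..<?g a}" using b(2) by simp
    qed
  next
    show "{1..<?g a} \<subseteq> ?g ` {b\<in>{1..n}. ?g b < ?g a}"
    proof
      fix y assume y: "y \<in> {1..<?g a}"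
      then have yS: "y \<in> {1..n}" using ga by auto
      have "\<rho> y \<in> {1..n}" using yS by (rule permutes_in_image[OF assms(1), THEN iffD2])
      moreover have "?g (\<rho> y) = y" using permutes_inverses(2)[OF assms(1)] by simp
      ultimately show "y \<in> ?g ` {b\<in>{1..n}. ?g b < ?g a}" using y by (intro image_eqI[of y ?g "\<rho> y"]) auto
    qed
  qed
  then have "card {b\<in>{1..n}. ?g b < ?g a} = ?g a - 1"
  proof -
    have "inj_on ?g {b\<in>{1..n}. ?g b < ?g a}" using inj inj_on_subset by blast
    then have "card (?g ` {b\<in>{1..n}. ?g b < ?g a}) = card {b\<in>{1..n}. ?g b < ?g a}"
      by (rule card_image)
    then show ?thesis using \<open>?g ` {b\<in>{1..n}. ?g b < ?g a} = {1..<?g a}\<close> by simp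
  qed
  then show ?thesis using ga by auto
qed

lemma unique:
  assumes "\<rho>1 permutes {1..n}" "\<rho>2 permutes {1..n}" "E (Psi n \<rho>1) = E (Psi n \<rho>2)"
  shows "\<rho>1 = \<rho>2"
proof -
  have i1: "inj (inv \<rho>1)" using permutes_inv[OF assms(1)] permutes_inj by blast
  have i2: "inj (inv \<rho>2)" using permutes_inv[OF assms(2)] permutes_inj by blast
  have cmp: "inv \<rho>1 b < inv \<rho>1 a \<longleftrightarrow> inv \<rho>2 b < inv \<rho>2 a"
    if "a \<in> {1..n}" "b \<in> {1..n}" for a b
  proof -
    consider "b < a" | "b = a" | "a < b" by linarith
    then show ?thesis
    proof cases
      case 1
      then show ?thesis using that assms(3) E_iff[OF assms(1), of b a] E_iff[OF assms(2), of b a] by auto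
    next
      case 3
      have "inv \<rho>1 a \<noteq> inv \<rho>1 b" "inv \<rho>2 a \<noteq> inv \<rho>2 b" using 3 i1 i2 by (auto dest: injD)
      then show ?thesis using 3 that assms(3) E_iff[OF assms(1), of a b] E_iff[OF assms(2), of a b] by auto
    qed simp
  qed
  have "inv \<rho>1 a = inv \<rho>2 a" for a
  proof (cases "a \<in> {1..n}")
    case True
    have "{b\<in>{1..n}. inv \<rho>1 b < inv \<rho>1 a} = {b\<in>{1..n}. inv \<rho>2 b < inv \<rho>2 a}"
      using cmp True by blast
    then show ?thesis using rank[OF assms(1) True] rank[OF assms(2) True] by simp
  next
    case False
    then show ?thesis using permutes_inv[OF assms(1)] permutes_inv[OF assms(2)]
      by (simp add: permutes_not_in)
  qed
  then have "inv \<rho>1 = inv \<rho>2" by auto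
  then show ?thesis using permutes_inv_inv[OF assms(1)] permutes_inv_inv[OF assms(2)] by metis
qed

lemma tt: "transpose p (Suc p) x < transpose p (Suc p) y \<longleftrightarrow> (x < y \<and> \<not> (x = p \<and> y = Suc p)) \<or> (x = Suc p \<and> y = p)"
  unfolding transpose_def by auto

lemma word_nth: "k < n \<Longrightarrow> word n \<sigma> ! k = \<sigma> (Suc k)"
  unfolding word_def by (simp del: upt_Suc)

lemma word_len: "length (word n \<sigma>) = n"
  unfolding word_def by simp

theorem lemma14:
  fixes n :: nat and \<sigma> \<tau> :: "nat \<Rightarrow> nat" and i j :: nat
  assumes "\<sigma> permutes {1..n}" and "\<tau> permutes {1..n}"
    and "(i, j) \<in> E (Psi n \<sigma>)"
    and "E (Psi n \<tau>) = E (Psi n \<sigma>) - {(i, j)}"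
  shows "\<exists>k. Suc k < n \<and> word n \<sigma> ! k = i \<and> word n \<sigma> ! Suc k = j \<and>
           word n \<tau> = (word n \<sigma>)[k := j, Suc k := i]"
proof -
  define S where "S = {1..n}"
  have sp: "\<sigma> permutes S" "\<tau> permutes S" using assms S_def by auto
  have is1: "inj (inv \<sigma>)" using permutes_inv[OF assms(1)] permutes_inj by blast
  have it1: "inj (inv \<tau>)" using permutes_inv[OF assms(2)] permutes_inj by blast
  define p where "p = inv \<sigma> i"
  define q where "q = inv \<sigma> j"
  have ij: "i \<in> S" "j \<in> S" "i < j" "p < q"
    using assms(3) E_iff[OF assms(1)] p_def q_def S_def by auto
  have pS: "p \<in> S" "q \<in> S" unfolding p_def q_def
    using ij(1,2) permutes_in_image[OF permutes_inv[OF sp(1)]] by simp_all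
  have H: "inv \<tau> a < inv \<tau> b \<longleftrightarrow> inv \<sigma> a < inv \<sigma> b \<and> (a, b) \<noteq> (i, j)"
    if "a \<in> S" "b \<in> S" "a < b" for a b
    using that assms(4) E_iff[OF assms(1), of a b] E_iff[OF assms(2), of a b] S_def by auto
  have sinv: "\<sigma> (inv \<sigma> x) = x" "inv \<sigma> (\<sigma> x) = x" for x
    using permutes_inverses[OF assms(1)] by auto
  have qp: "q = Suc p"
  proof (rule ccontr)
    assume "q \<noteq> Suc p"
    then have r: "p < Suc p" "Suc p < q" using ij by auto
    define m where "m = \<sigma> (Suc p)"
    have "Suc p \<in> S" using pS r S_def by auto
    then have mS: "m \<in> S" unfolding m_def by (rule permutes_in_image[OF sp(1), THEN iffD2])
    have im: "inv \<sigma> m = Suc p" using m_def sinv by auto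
    have "m \<noteq> i" "m \<noteq> j" using im p_def q_def r by auto
    then have d: "inv \<tau> m \<noteq> inv \<tau> i" "inv \<tau> m \<noteq> inv \<tau> j" "inv \<tau> i \<noteq> inv \<tau> j"
      using it1 ij by (auto dest: injD)
    have tij: "\<not> inv \<tau> i < inv \<tau> j" using H[of i j] ij by auto
    consider "m < i" | "i < m \<and> m < j" | "j < m" using \<open>m \<noteq> i\<close> \<open>m \<noteq> j\<close> by linarith
    then show False
    proof cases
      case 1
      have a: "inv \<tau> m < inv \<tau> j" using H[of m j] 1 ij mS im q_def r by auto
      have b: "\<not> inv \<tau> m < inv \<tau> i" using H[of m i] 1 ij mS im p_def r by auto
      show False using a b tij d by linarith
    next
      case 2
      have a: "inv \<tau> m < inv \<tau> j" using H[of m j] 2 ij mS im q_def r by auto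
      have b: "inv \<tau> i < inv \<tau> m" using H[of i m] 2 ij mS im p_def r by auto
      show False using a b tij by linarith
    next
      case 3
      have a: "\<not> inv \<tau> j < inv \<tau> m" using H[of j m] 3 ij mS im q_def r by auto
      have b: "inv \<tau> i < inv \<tau> m" using H[of i m] 3 ij mS im p_def r by auto
      show False using a b tij d by linarith
    qed
  qed
  define t where "t = transpose p (Suc p)"
  define \<sigma>' where "\<sigma>' = \<sigma> \<circ> t"
  have tp: "t permutes S" using pS qp t_def by (simp add: permutes_swap_id)
  have s'p: "\<sigma>' permutes {1..n}" using permutes_compose[OF tp sp(1)] \<sigma>'_def S_def by simp
  have invs': "inv \<sigma>' = t \<circ> inv \<sigma>"
    unfolding \<sigma>'_def t_def
    by (metis o_inv_distrib permutes_bij sp(1) bij_transpose inv_transpose_eq)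
  have "E (Psi n \<sigma>') = E (Psi n \<sigma>) - {(i, j)}"
  proof (rule set_eqI, clarify)
    fix a b
    have ia: "inv \<sigma> a = p \<longleftrightarrow> a = i" "inv \<sigma> b = Suc p \<longleftrightarrow> b = j"
             "inv \<sigma> a = Suc p \<longleftrightarrow> a = j" "inv \<sigma> b = p \<longleftrightarrow> b = i"
      using p_def q_def qp sinv by metis+
    show "(a, b) \<in> E (Psi n \<sigma>') \<longleftrightarrow> (a, b) \<in> E (Psi n \<sigma>) - {(i, j)}"
      unfolding Diff_iff E_iff[OF s'p] E_iff[OF assms(1)] invs' o_def t_def tt using ia ij(3)
      by auto
  qed
  then have eq: "\<tau> = \<sigma>'" using unique[OF assms(2) s'p] assms(4) by simp
  have p1: "1 \<le> p" "Suc p \<le> n" using pS qp S_def by auto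
  show ?thesis
  proof (intro exI[of _ "p - 1"] conjI)
    show "Suc (p - 1) < n" using p1 by auto
    have si: "\<sigma> p = i" "\<sigma> (Suc p) = j" using p_def q_def qp sinv by auto
    show "word n \<sigma> ! (p - 1) = i" using p1 si by (simp add: word_nth)
    show "word n \<sigma> ! Suc (p - 1) = j" using p1 si by (simp add: word_nth)
    show "word n \<tau> = (word n \<sigma>)[p - 1 := j, Suc (p - 1) := i]"
    proof (rule nth_equalityI)
      show "length (word n \<tau>) = length ((word n \<sigma>)[p - 1 := j, Suc (p - 1) := i])"
        by (simp add: word_len)
      fix k assume "k < length (word n \<tau>)"
      then have k: "k < n" by (simp add: word_len)
      have "word n \<tau> ! k = \<sigma> (t (Suc k))" using k eq \<sigma>'_def by (simp add: word_nth)
      also have "\<dots> = ((word n \<sigma>)[p - 1 := j, Suc (p - 1) := i]) ! k"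
      proof -
        consider "Suc k = p" | "k = p" | "Suc k \<noteq> p" "k \<noteq> p" by blast
        then show ?thesis
        proof cases
          case 1
          then have kp: "k = p - 1" by simp
          show ?thesis using 1 k p1 si unfolding t_def kp by (simp add: word_len)
        next
          case 2
          then show ?thesis using k p1 si unfolding t_def by (simp add: word_len)
        next
          case 3
          then have "t (Suc k) = Suc k" unfolding t_def by (simp add: transpose_def)
          then show ?thesis using k p1 3 by (simp add: word_nth)
        qed
      qed
      finally show "word n \<tau> ! k = ((word n \<sigma>)[p - 1 := j, Suc (p - 1) := i]) ! k" .
    qed
  qed
qed

end
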